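(* Let $\mathcal{D}\subset\mathbb{R}^2$ be open and bounded, $\mathcal{K}=\{0,1,2\}$, $\boldsymbol{\phi}=(\phi_0,\phi_1,\phi_2)\in\mathcal{C}^\infty(\mathbb{R}^2,\mathbb{R}^3)$ with $\phi_0\equiv0$. Let $\hat x\in\mathcal{E}_{\mathcal{K}}(\boldsymbol{\phi})$ and assume $D\widehat{\boldsymbol{\phi}}_{\mathcal{K}}(\hat x)$ is invertible. Then for all $k\in\mathcal{K}$, $$\beta_k=\arccos\frac{\nabla(\phi_{[k+1]_3}-\phi_k)\cdot\nabla(\phi_k-\phi_{[k+2]_3})}{|\nabla(\phi_{[k+1]_3}-\phi_k)|\,|\nabla(\phi_k-\phi_{[k+2]_3})|},$$ with gradients evaluated at $\hat x$, where $[j]_3$ denotes $j$ modulo $3$.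
   Context: For $j\in\mathcal{K}$, $\Omega_j(\boldsymbol{\phi})=\operatorname{int}\{x\in\mathcal{D}\mid\phi_j(x)\le\phi_m(x)\ \forall m\ne j\}$; for $\mathcal{I}\subset\mathcal{K}$, $\mathcal{E}_{\mathcal{I}}(\boldsymbol{\phi})=\bigcap_{j\in\mathcal{I}}\partial\Omega_j(\boldsymbol{\phi})$; $\widehat{\boldsymbol{\phi}}_{\mathcal{K}}=(\phi_0-\phi_1,\phi_0-\phi_2)$. For $\mathcal{I}\in\{\{0,1\},\{1,2\},\{0,2\}\}$, $\mathbb{D}_{\mathcal{I}}$ denotes the half-tangent to the curve $\mathcal{E}_{\mathcal{I}}(\boldsymbol{\phi})$ at $\hat x$. In polar coordinates centered at $\hat x$ with angle $\vartheta\in[0,2\pi]$, $\vartheta=0$ along $\mathbb{D}_{\{0,2\}}$, let $\vartheta_0$ be the angle of $\mathbb{D}_{\{0,1\}}$ and $\vartheta_1$ that of $\mathbb{D}_{\{1,2\}}$, labels of $\phi_0,\phi_2$ being exchanged if necessary so that $\vartheta_0\le\vartheta_1$; then $\beta_0=\vartheta_0$, $\beta_1=\vartheta_1-\vartheta_0$, $\beta_2=2\pi-\vartheta_1$. *)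

theory Defs
  imports "HOL-Analysis.Analysis"
begin

type_synonym pt = "real^2"

primrec C_k :: "nat \<Rightarrow> (pt \<Rightarrow> real) \<Rightarrow> bool" where
  "C_k 0 f = continuous_on UNIV f"
| "C_k (Suc n) f = (f differentiable_on UNIV \<and>
       (\<forall>v. C_k n (\<lambda>x. frechet_derivative f (at x) v)))"

definition smooth :: "(pt \<Rightarrow> real) \<Rightarrow> bool" where
  "smooth f = (\<forall>n. C_k n f)"

definition region :: "(nat \<Rightarrow> pt \<Rightarrow> real) \<Rightarrow> pt set \<Rightarrow> nat \<Rightarrow> pt set" where
  "region \<phi> D j = interior {x \<in> D. \<forall>m\<in>{0,1,2::nat}. m \<noteq> j \<longrightarrow> \<phi> j x \<le> \<phi> m x}"

definition edge :: "(nat \<Rightarrow> pt \<Rightarrow> real) \<Rightarrow> pt set \<Rightarrow> nat set \<Rightarrow> pt set" where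
  "edge \<phi> D I = (\<Inter>j\<in>I. frontier (region \<phi> D j))"

definition half_tangent :: "pt set \<Rightarrow> pt \<Rightarrow> pt \<Rightarrow> bool" where
  "half_tangent S x d = (norm d = 1 \<and> x islimpt S \<and>
      ((\<lambda>y. (1 / norm (y - x)) *\<^sub>R (y - x)) \<longlongrightarrow> d) (at x within S))"

definition rot :: "real \<Rightarrow> pt \<Rightarrow> pt" where
  "rot t a = vector [cos t * a$1 - sin t * a$2, sin t * a$1 + cos t * a$2]"

definition grad :: "(pt \<Rightarrow> real) \<Rightarrow> pt \<Rightarrow> pt" where
  "grad f x = (\<chi> i. frechet_derivative f (at x) (axis i 1))"

definition hatphi :: "(nat \<Rightarrow> pt \<Rightarrow> real) \<Rightarrow> pt \<Rightarrow> real^2" where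
  "hatphi \<phi> x = vector [\<phi> 0 x - \<phi> 1 x, \<phi> 0 x - \<phi> 2 x]"

definition beta :: "real \<Rightarrow> real \<Rightarrow> nat \<Rightarrow> real" where
  "beta t0 t1 k = (if k = 0 then t0 else if k = 1 then t1 - t0 else 2 * pi - t1)"

definition angle_formula :: "(nat \<Rightarrow> pt \<Rightarrow> real) \<Rightarrow> pt \<Rightarrow> nat \<Rightarrow> real" where
  "angle_formula \<phi> x k =
     (let g1 = grad (\<lambda>y. \<phi> ((k + 1) mod 3) y - \<phi> k y) x;
          g2 = grad (\<lambda>y. \<phi> k y - \<phi> ((k + 2) mod 3) y) x
      in arccos ((g1 \<bullet> g2) / (norm g1 * norm g2)))"

definition swap02 :: "nat \<Rightarrow> nat" where
  "swap02 j = (if j = 0 then 2 else if j = 2 then 0 else j)"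

end

theory Submission
  imports Defs
begin


lemma G:
  fixes u1 u2 c s p1 p2 q1 q2 v1 v2 :: real
  assumes u: "u1^2+u2^2=1" and cs: "c^2+s^2=1" and v1: "v1 = c* u1 - s* u2" and v2: "v2 = s* u1 + c* u2"
    and pv: "p1* v1+p2* v2 = 0" and qu: "q1* u1+q2* u2=0"
  shows "p1* q1+p2* q2 = (-p1* v2 + p2* v1)*(-q1* u2 + q2* u1)* c"
    "p1* u1+p2* u2 = - (-p1* v2 + p2* v1)* s"
    "q1* v1+q2* v2 = (-q1* u2 + q2* u1)* s"
    "p1^2+p2^2 = (-p1* v2 + p2* v1)^2"
    "q1^2+q2^2 = (-q1* u2 + q2* u1)^2"
    "p1* q2 - p2* q1 = - (-p1* v2 + p2* v1)*(-q1* u2 + q2* u1)* s"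
proof -
  define \<alpha> where "\<alpha> = -p1* v2 + p2* v1"
  define \<beta> where "\<beta> = -q1* u2 + q2* u1"
  have vv: "v1^2+v2^2 = 1"
  proof -
    have "v1^2+v2^2 = (c^2+s^2)*(u1^2+u2^2)" unfolding v1 v2 by algebra
    thus ?thesis using u cs by simp
  qed
  have p1: "p1 = -\<alpha>* v2" unfolding \<alpha>_def
  proof -
    have "-(-p1* v2 + p2* v1)* v2 = p1* v2^2 - (p2* v2)* v1" by algebra
    also have "\<dots> = p1* v2^2 + p1* v1* v1" using pv by algebra
    also have "\<dots> = p1*(v1^2+v2^2)" by algebra
    finally show "p1 = - (-p1* v2 + p2* v1)* v2" using vv by simp
  qed
  have p2: "p2 = \<alpha>* v1" unfolding \<alpha>_def
  proof -
    have "(-p1* v2 + p2* v1)* v1 = - (p1* v1)* v2 + p2* v1^2" by algebra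
    also have "\<dots> = p2* v2* v2 + p2* v1^2" using pv by algebra
    also have "\<dots> = p2*(v1^2+v2^2)" by algebra
    finally show "p2 = (-p1* v2 + p2* v1)* v1" using vv by simp
  qed
  have q1: "q1 = -\<beta>* u2" unfolding \<beta>_def
  proof -
    have "-(-q1* u2 + q2* u1)* u2 = q1* u2^2 - (q2* u2)* u1" by algebra
    also have "\<dots> = q1* u2^2 + q1* u1* u1" using qu by algebra
    also have "\<dots> = q1*(u1^2+u2^2)" by algebra
    finally show "q1 = - (-q1* u2 + q2* u1)* u2" using u by simp
  qed
  have q2: "q2 = \<beta>* u1" unfolding \<beta>_def
  proof -
    have "(-q1* u2 + q2* u1)* u1 = - (q1* u1)* u2 + q2* u1^2" by algebra
    also have "\<dots> = q2* u2* u2 + q2* u1^2" using qu by algebra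
    also have "\<dots> = q2*(u1^2+u2^2)" by algebra
    finally show "q2 = (-q1* u2 + q2* u1)* u1" using u by simp
  qed
  have "p1* q1+p2* q2 = \<alpha>* \<beta>* c"
  proof -
    have "p1* q1+p2* q2 = \<alpha>* \<beta>*(v1* u1+v2* u2)" by (subst p1, subst p2, subst q1, subst q2) algebra
    also have "v1* u1+v2* u2 = c*(u1^2+u2^2)" unfolding v1 v2 by algebra
    finally show ?thesis using u by simp
  qed
  moreover have "p1* u1+p2* u2 = -\<alpha>* s"
  proof -
    have "p1* u1+p2* u2 = \<alpha>*(v1* u2-v2* u1)" by (subst p1, subst p2) algebra
    also have "v1* u2-v2* u1 = -s*(u1^2+u2^2)" unfolding v1 v2 by algebra
    finally show ?thesis using u by simp
  qed
  moreover have "q1* v1+q2* v2 = \<beta>* s"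
  proof -
    have "q1* v1+q2* v2 = \<beta>*(u1* v2-u2* v1)" by (subst q1, subst q2) algebra
    also have "u1* v2-u2* v1 = s*(u1^2+u2^2)" unfolding v1 v2 by algebra
    finally show ?thesis using u by simp
  qed
  moreover have "p1^2+p2^2 = \<alpha>^2"
  proof -
    have "p1^2+p2^2 = \<alpha>^2*(v1^2+v2^2)" by (subst p1, subst p2) algebra
    thus ?thesis using vv by simp
  qed
  moreover have "q1^2+q2^2 = \<beta>^2"
  proof -
    have "q1^2+q2^2 = \<beta>^2*(u1^2+u2^2)" by (subst q1, subst q2) algebra
    thus ?thesis using u by simp
  qed
  moreover have "p1* q2 - p2* q1 = -\<alpha>* \<beta>* s"
  proof -
    have "p1* q2 - p2* q1 = - \<alpha>* \<beta>*(u1* v2-u2* v1)" by (subst p1, subst p2, subst q1, subst q2) algebra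
    also have "u1* v2-u2* v1 = s*(u1^2+u2^2)" unfolding v1 v2 by algebra
    finally show ?thesis using u by simp
  qed
  ultimately show "p1* q1+p2* q2 = (-p1* v2 + p2* v1)*(-q1* u2 + q2* u1)* c"
    "p1* u1+p2* u2 = - (-p1* v2 + p2* v1)* s"
    "q1* v1+q2* v2 = (-q1* u2 + q2* u1)* s"
    "p1^2+p2^2 = (-p1* v2 + p2* v1)^2"
    "q1^2+q2^2 = (-q1* u2 + q2* u1)^2"
    "p1* q2 - p2* q1 = - (-p1* v2 + p2* v1)*(-q1* u2 + q2* u1)* s" unfolding \<alpha>_def \<beta>_def by simp_all
qed


lemma inner2: "(x::real^2) \<bullet> y = x$1 * y$1 + x$2 * y$2"
  by (simp add: inner_vec_def sum_2)

lemma norm2: "norm (x::real^2) = sqrt (x$1^2 + x$2^2)"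
  by (simp add: norm_eq_sqrt_inner inner2 power2_eq_square)

lemma lin_rep:
  assumes "linear (L::real^2 \<Rightarrow> real)"
  shows "L v = (\<chi> i. L (axis i 1)) \<bullet> v"
proof -
  have v: "v = v$1 *\<^sub>R axis 1 1 + v$2 *\<^sub>R axis 2 1"
    by (simp add: vec_eq_iff forall_2 axis_def)
  have "L v = v$1 * L (axis 1 1) + v$2 * L (axis 2 1)"
    by (subst v) (simp add: linear_add[OF assms] linear_scale[OF assms])
  thus ?thesis by (simp add: inner2)
qed

lemma deriv_grad:
  assumes "f differentiable (at x)"
  shows "(f has_derivative (\<lambda>v. grad f x \<bullet> v)) (at x)"
proof -
  have d: "(f has_derivative frechet_derivative f (at x)) (at x)"
    using assms frechet_derivative_works by blast
  have "linear (frechet_derivative f (at x))"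
    using has_derivative_linear[OF d] .
  hence "frechet_derivative f (at x) = (\<lambda>v. grad f x \<bullet> v)"
    unfolding grad_def using lin_rep by blast
  thus ?thesis using d by simp
qed

lemma grad_unique:
  assumes "(f has_derivative (\<lambda>v. g \<bullet> v)) (at x)"
  shows "grad f x = g"
proof -
  have "(\<lambda>v. g \<bullet> v) = frechet_derivative f (at x)" using frechet_derivative_at[OF assms] .
  hence "grad f x = (\<chi> i. g \<bullet> axis i 1)" unfolding grad_def by metis
  also have "\<dots> = g" by (simp add: vec_eq_iff inner_axis)
  finally show ?thesis .
qed

lemma smooth_diff: "smooth f \<Longrightarrow> f differentiable (at x)"
proof -
  assume "smooth f"
  hence "C_k 1 f" unfolding smooth_def by blast
  hence "f differentiable_on UNIV" by simp
  thus ?thesis unfolding differentiable_on_def by simp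
qed

lemma smooth_cont: "smooth f \<Longrightarrow> continuous_on UNIV f"
proof -
  assume "smooth f"
  hence "C_k 0 f" unfolding smooth_def by blast
  thus ?thesis by simp
qed

lemma ht:
  assumes h: "half_tangent S x d" and S: "S \<subseteq> {y. f y = 0 \<and> 0 \<le> g y}"
    and f0: "f x = 0" and g0: "g x = 0"
    and df: "(f has_derivative (\<lambda>v. p \<bullet> v)) (at x)"
    and dg: "(g has_derivative (\<lambda>v. q \<bullet> v)) (at x)"
  shows "p \<bullet> d = 0 \<and> 0 \<le> q \<bullet> d"
proof -
  define U where "U = (\<lambda>y. (1 / norm (y - x)) *\<^sub>R (y - x))"
  define F where "F = at x within S"
  have U: "(U \<longlongrightarrow> d) F" and lp: "x islimpt S" using h unfolding half_tangent_def U_def F_def by auto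
  have nt: "F \<noteq> bot" using lp trivial_limit_within unfolding F_def by blast
  have ev: "eventually (\<lambda>y. y \<noteq> x \<and> y \<in> S) F"
    unfolding F_def eventually_at_filter by simp
  have df': "((\<lambda>y. ((f y - f x) - p \<bullet> (y - x)) /\<^sub>R norm (y - x)) \<longlongrightarrow> 0) F"
    using has_derivative_at_withinI[OF df, of S] unfolding has_derivative_at_within F_def by blast
  have dg': "((\<lambda>y. ((g y - g x) - q \<bullet> (y - x)) /\<^sub>R norm (y - x)) \<longlongrightarrow> 0) F"
    using has_derivative_at_withinI[OF dg, of S] unfolding has_derivative_at_within F_def by blast
  have e1: "eventually (\<lambda>y. ((f y - f x) - p \<bullet> (y - x)) /\<^sub>R norm (y - x) = - (p \<bullet> U y)) F"
    using ev by eventually_elim (use S f0 in \<open>auto simp: U_def inner_scaleR_right divide_simps\<close>)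
  have "((\<lambda>y. - (p \<bullet> U y)) \<longlongrightarrow> 0) F" using tendsto_cong[OF e1] df' by simp
  moreover have "((\<lambda>y. - (p \<bullet> U y)) \<longlongrightarrow> - (p \<bullet> d)) F"
    by (intro tendsto_intros U)
  ultimately have 1: "p \<bullet> d = 0" using tendsto_unique[OF nt] by fastforce
  have e2: "eventually (\<lambda>y. ((g y - g x) - q \<bullet> (y - x)) /\<^sub>R norm (y - x) = g y / norm (y - x) - q \<bullet> U y) F"
    using ev by eventually_elim (use g0 in \<open>auto simp: U_def inner_scaleR_right divide_simps\<close>)
  have "((\<lambda>y. g y / norm (y - x) - q \<bullet> U y) \<longlongrightarrow> 0) F" using tendsto_cong[OF e2] dg' by simp
  moreover have "((\<lambda>y. q \<bullet> U y) \<longlongrightarrow> q \<bullet> d) F" by (intro tendsto_intros U)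
  ultimately have "((\<lambda>y. (g y / norm (y - x) - q \<bullet> U y) + q \<bullet> U y) \<longlongrightarrow> 0 + q \<bullet> d) F"
    by (rule tendsto_add)
  hence lim: "((\<lambda>y. g y / norm (y - x)) \<longlongrightarrow> q \<bullet> d) F" by simp
  have "eventually (\<lambda>y. 0 \<le> g y / norm (y - x)) F"
    using ev by eventually_elim (use S in auto)
  hence "0 \<le> q \<bullet> d" using tendsto_lowerbound[OF lim _ nt] by blast
  with 1 show ?thesis by simp
qed



lemma sinpos: "0 \<le> (x::real) \<Longrightarrow> x < 2*pi \<Longrightarrow> 0 < sin x \<Longrightarrow> x < pi"
proof (rule ccontr)
  assume "0 \<le> x" "x < 2*pi" "0 < sin x" "\<not> x < pi"
  hence "0 \<le> sin (x - pi)" by (intro sin_ge_zero) auto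
  thus False using \<open>0 < sin x\<close> by simp
qed

lemma sinneg: "0 \<le> (x::real) \<Longrightarrow> x < 2*pi \<Longrightarrow> sin x < 0 \<Longrightarrow> pi < x"
proof (rule ccontr)
  assume "0 \<le> x" "x < 2*pi" "sin x < 0" "\<not> pi < x"
  hence "0 \<le> sin x" by (intro sin_ge_zero) auto
  thus False using \<open>sin x < 0\<close> by simp
qed

lemma fracpos: "X*Y > 0 \<Longrightarrow> (X*Y*c)/(sqrt(X^2) * sqrt(Y^2)) = (c::real)"
proof -
  assume h: "X*Y > 0"
  have "sqrt(X^2) * sqrt(Y^2) = \<bar>X*Y\<bar>" by (simp add: abs_mult)
  also have "\<dots> = X*Y" using h by simp
  finally have e: "sqrt(X^2) * sqrt(Y^2) = X*Y" .
  have "X*Y \<noteq> 0" using h by (metis less_irrefl)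
  thus ?thesis unfolding e by (rule nonzero_mult_div_cancel_left)
qed
lemma fracneg: "X*Y < 0 \<Longrightarrow> (-(X*Y*c))/(sqrt(X^2) * sqrt(Y^2)) = (c::real)"
proof -
  assume h: "X*Y < 0"
  have "sqrt(X^2) * sqrt(Y^2) = \<bar>X*Y\<bar>" by (simp add: abs_mult)
  also have "\<dots> = -(X*Y)" using h by simp
  finally have e: "sqrt(X^2) * sqrt(Y^2) = -(X*Y)" .
  have "-(X*Y) \<noteq> 0" using h by (metis neg_equal_0_iff_equal less_irrefl)
  hence "(-(X*Y)*c)/(-(X*Y)) = c" by (rule nonzero_mult_div_cancel_left)
  thus ?thesis unfolding e by simp
qed

lemma Ang:
  fixes t0 t1 A1 B1 A2 :: real
  assumes r: "0 \<le> t0" "t0 < 2*pi" "0 \<le> t1" "t1 < 2*pi"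
    and nz: "A1 \<noteq> 0" "B1 \<noteq> 0" "A2 \<noteq> 0" "sin t0 \<noteq> 0" "sin (t1 - t0) \<noteq> 0" "sin t1 \<noteq> 0"
    and h1: "0 \<le> - A1 * sin t0" and h2: "0 \<le> B1 * sin t0" and h3: "0 \<le> - A2 * sin (t1 - t0)"
    and h4: "A1 * sin (t1 - t0) \<le> 0" and h5: "- A2 * sin t1 \<le> 0" and h6: "B1 * sin t1 \<le> 0"
  shows "A1*B1 < 0" "A1*A2 > 0" "B1*A2 < 0"
    "t0 \<le> t1 \<Longrightarrow> arccos (cos t0) = t0 \<and> arccos (cos (t1 - t0)) = t1 - t0 \<and> arccos (cos t1) = 2*pi - t1"
    "\<not> t0 \<le> t1 \<Longrightarrow> arccos (cos t1) = t1 \<and> arccos (cos (t1 - t0)) = t0 - t1 \<and> arccos (cos t0) = 2*pi - t0"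
proof -
  have cases: "(sin t0 > 0 \<and> A1 < 0 \<and> B1 > 0 \<and> sin (t1-t0) > 0 \<and> A2 < 0 \<and> sin t1 < 0) \<or>
               (sin t0 < 0 \<and> A1 > 0 \<and> B1 < 0 \<and> sin (t1-t0) < 0 \<and> A2 > 0 \<and> sin t1 > 0)"
  proof (cases "sin t0 > 0")
    case True
    have "A1 < 0" using h1 True nz(1) by (auto simp: zero_le_mult_iff mult_le_0_iff)
    moreover have "B1 > 0" using h2 True nz(2) by (auto simp: zero_le_mult_iff mult_le_0_iff)
    moreover have "sin (t1-t0) > 0" using h4 \<open>A1 < 0\<close> nz(5) by (auto simp: zero_le_mult_iff mult_le_0_iff)
    moreover have "A2 < 0" using h3 \<open>sin (t1-t0) > 0\<close> nz(3) by (auto simp: zero_le_mult_iff mult_le_0_iff)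
    moreover have "sin t1 < 0" using h6 \<open>B1 > 0\<close> nz(6) by (auto simp: zero_le_mult_iff mult_le_0_iff)
    ultimately show ?thesis using True by simp
  next
    case False
    hence F: "sin t0 < 0" using nz(4) by simp
    have "A1 > 0" using h1 F nz(1) by (auto simp: zero_le_mult_iff mult_le_0_iff)
    moreover have "B1 < 0" using h2 F nz(2) by (auto simp: zero_le_mult_iff mult_le_0_iff)
    moreover have "sin (t1-t0) < 0" using h4 \<open>A1 > 0\<close> nz(5) by (auto simp: zero_le_mult_iff mult_le_0_iff)
    moreover have "A2 > 0" using h3 \<open>sin (t1-t0) < 0\<close> nz(3) by (auto simp: zero_le_mult_iff mult_le_0_iff)
    moreover have "sin t1 > 0" using h6 \<open>B1 < 0\<close> nz(6) by (auto simp: zero_le_mult_iff mult_le_0_iff)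
    ultimately show ?thesis using F by simp
  qed
  show "A1*B1 < 0" "A1*A2 > 0" "B1*A2 < 0" using cases
    by (auto simp: mult_neg_pos mult_pos_neg mult_neg_neg mult_pos_pos)
  show "t0 \<le> t1 \<Longrightarrow> arccos (cos t0) = t0 \<and> arccos (cos (t1 - t0)) = t1 - t0 \<and> arccos (cos t1) = 2*pi - t1"
  proof -
    assume le: "t0 \<le> t1"
    have c1: "sin t0 > 0 \<and> sin (t1-t0) > 0 \<and> sin t1 < 0"
    proof (rule ccontr)
      assume "\<not> ?thesis"
      hence "sin t0 < 0" "sin t1 > 0" using cases by auto
      hence "pi < t0" "t1 < pi" using sinneg[of t0] sinpos[of t1] r by auto
      thus False using le by simp
    qed
    hence "t0 < pi" "pi < t1" "t1 - t0 < pi" using sinneg[of t1] sinpos[of t0] sinpos[of "t1-t0"] r le by auto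
    hence "arccos (cos t0) = t0" "arccos (cos (t1 - t0)) = t1 - t0" using r le by (auto intro!: arccos_cos)
    moreover have "arccos (cos (2*pi - t1)) = 2*pi - t1" by (rule arccos_cos) (use r \<open>pi < t1\<close> in auto)
    ultimately show ?thesis by simp
  qed
  show "\<not> t0 \<le> t1 \<Longrightarrow> arccos (cos t1) = t1 \<and> arccos (cos (t1 - t0)) = t0 - t1 \<and> arccos (cos t0) = 2*pi - t0"
  proof -
    assume le: "\<not> t0 \<le> t1"
    have c1: "sin t0 < 0 \<and> sin (t0-t1) > 0 \<and> sin t1 > 0"
    proof (rule ccontr)
      assume "\<not> ?thesis"
      moreover have "sin (t0-t1) = - sin (t1-t0)" by (metis sin_minus minus_diff_eq)
      ultimately have "sin t0 > 0" "sin t1 < 0" using cases by auto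
      hence "pi > t0" "t1 > pi" using sinneg[of t1] sinpos[of t0] r by auto
      thus False using le by simp
    qed
    hence "t1 < pi" "pi < t0" "t0 - t1 < pi" using sinneg[of t0] sinpos[of t1] sinpos[of "t0-t1"] r le by auto
    hence "arccos (cos t1) = t1" "arccos (cos (t0 - t1)) = t0 - t1" using r le by (auto intro!: arccos_cos)
    moreover have "arccos (cos (2*pi - t0)) = 2*pi - t0" by (rule arccos_cos) (use r \<open>pi < t0\<close> in auto)
    moreover have "cos (t1 - t0) = cos (t0 - t1)" by (metis cos_minus minus_diff_eq)
    ultimately show ?thesis by simp
  qed
qed

lemma has_deriv_diff_inner:
  assumes "(f has_derivative (\<lambda>v. p \<bullet> v)) F" "(g has_derivative (\<lambda>v. q \<bullet> v)) F"
  shows "((\<lambda>y. f y - g y) has_derivative (\<lambda>v. (p - q) \<bullet> v)) F"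
  using has_derivative_diff[OF assms] by (simp add: inner_diff_left)

theorem proposition5p2:
  fixes D :: "pt set" and \<phi> :: "nat \<Rightarrow> pt \<Rightarrow> real" and xh d01 d12 d02 :: pt
    and t0 t1 :: real
  assumes "open D" and "bounded D"
    and "\<forall>j\<in>{0,1,2}. smooth (\<phi> j)" and "\<forall>x. \<phi> 0 x = 0"
    and "xh \<in> edge \<phi> D {0,1,2}"
    and "bij (frechet_derivative (hatphi \<phi>) (at xh))"
    and "half_tangent (edge \<phi> D {0,1}) xh d01"
    and "half_tangent (edge \<phi> D {1,2}) xh d12"
    and "half_tangent (edge \<phi> D {0,2}) xh d02"
    and "0 \<le> t0" and "t0 < 2 * pi" and "d01 = rot t0 d02"
    and "0 \<le> t1" and "t1 < 2 * pi" and "d12 = rot t1 d02"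
  shows "if t0 \<le> t1
         then (\<forall>k\<in>{0,1,2}. beta t0 t1 k = angle_formula \<phi> xh k)
         else (\<forall>k\<in>{0,1,2}. beta t1 t0 k = angle_formula (\<phi> \<circ> swap02) xh k)"
proof -
  note A = assms
  have P0: "\<phi> 0 = (\<lambda>x. 0)" using A(4) by auto
  have s1: "smooth (\<phi> 1)" and s2: "smooth (\<phi> 2)" using A(3) by auto
  define a where "a = grad (\<phi> 1) xh"
  define b where "b = grad (\<phi> 2) xh"
  define Gr where "Gr = (\<lambda>j::nat. if j = 1 then a else if j = 2 then b else (0::pt))"
  have D1: "(\<phi> 1 has_derivative (\<lambda>v. a \<bullet> v)) (at xh)"
    unfolding a_def by (rule deriv_grad[OF smooth_diff[OF s1]])
  have D2: "(\<phi> 2 has_derivative (\<lambda>v. b \<bullet> v)) (at xh)"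
    unfolding b_def by (rule deriv_grad[OF smooth_diff[OF s2]])
  have D0: "(\<phi> 0 has_derivative (\<lambda>v. (0::pt) \<bullet> v)) (at xh)"
    unfolding P0 by simp
  have Gr0: "Gr 0 = 0" "Gr 1 = a" "Gr 2 = b" by (simp_all add: Gr_def)
  have Gr1: "Gr (Suc 0) = a" "Gr (Suc (Suc 0)) = b" by (simp_all add: Gr_def)
  have DG: "(\<phi> j has_derivative (\<lambda>v. Gr j \<bullet> v)) (at xh)" if jj: "j \<in> {0,1,2}" for j
  proof -
    consider "j = 0" | "j = 1" | "j = 2" using jj by blast
    thus ?thesis
    proof cases
      case 1 thus ?thesis using D0 by (simp only: Gr0)
    next
      case 2 thus ?thesis using D1 by (simp only: Gr0)
    next
      case 3 thus ?thesis using D2 by (simp only: Gr0)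
    qed
  qed
  have GD: "grad (\<lambda>y. \<phi> k y - \<phi> m y) xh = Gr k - Gr m" if "k \<in> {0,1,2}" "m \<in> {0,1,2}" for k m
    by (rule grad_unique, rule has_deriv_diff_inner[OF DG[OF that(1)] DG[OF that(2)]])
  have c1: "continuous_on UNIV (\<phi> 1)" and c2: "continuous_on UNIV (\<phi> 2)"
    using smooth_cont s1 s2 by auto
  define C0 where "C0 = {x. 0 \<le> \<phi> 1 x \<and> 0 \<le> \<phi> 2 x}"
  define C1 where "C1 = {x. \<phi> 1 x \<le> 0 \<and> \<phi> 1 x \<le> \<phi> 2 x}"
  define C2 where "C2 = {x. \<phi> 2 x \<le> 0 \<and> \<phi> 2 x \<le> \<phi> 1 x}"
  have cl: "closed C0" "closed C1" "closed C2" unfolding C0_def C1_def C2_def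
    by (intro closed_Collect_conj closed_Collect_le continuous_on_const c1 c2)+
  have "region \<phi> D 0 \<subseteq> C0" unfolding region_def C0_def using A(4)
    by (intro order.trans[OF interior_subset]) auto
  hence F0: "frontier (region \<phi> D 0) \<subseteq> C0"
    using closure_minimal[OF _ cl(1)] unfolding frontier_def by blast
  have "region \<phi> D 1 \<subseteq> C1" unfolding region_def C1_def using A(4)
    by (intro order.trans[OF interior_subset]) auto
  hence F1: "frontier (region \<phi> D 1) \<subseteq> C1"
    using closure_minimal[OF _ cl(2)] unfolding frontier_def by blast
  have "region \<phi> D 2 \<subseteq> C2" unfolding region_def C2_def using A(4)
    by (intro order.trans[OF interior_subset]) auto
  hence F2: "frontier (region \<phi> D 2) \<subseteq> C2"
    using closure_minimal[OF _ cl(3)] unfolding frontier_def by blast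
  have xh0: "\<phi> 1 xh = 0" "\<phi> 2 xh = 0"
    using A(5) F0 F1 F2 unfolding edge_def C0_def C1_def C2_def by force+
  have E01: "edge \<phi> D {0,1} \<subseteq> {y. \<phi> 1 y = 0 \<and> 0 \<le> \<phi> 2 y}"
    using F0 F1 unfolding edge_def C0_def C1_def by force
  have E02: "edge \<phi> D {0,2} \<subseteq> {y. \<phi> 2 y = 0 \<and> 0 \<le> \<phi> 1 y}"
    using F0 F2 unfolding edge_def C0_def C2_def by force
  have E12: "edge \<phi> D {1,2} \<subseteq> {y. (\<lambda>y. \<phi> 2 y - \<phi> 1 y) y = 0 \<and> 0 \<le> (\<lambda>y. \<phi> 0 y - \<phi> 1 y) y}"
    using F1 F2 A(4) unfolding edge_def C1_def C2_def by force
  have T01: "a \<bullet> d01 = 0 \<and> 0 \<le> b \<bullet> d01"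
    by (rule ht[OF A(7) E01 xh0(1) xh0(2) D1 D2])
  have T02: "b \<bullet> d02 = 0 \<and> 0 \<le> a \<bullet> d02"
    by (rule ht[OF A(9) E02 xh0(2) xh0(1) D2 D1])
  have T12: "(b - a) \<bullet> d12 = 0 \<and> 0 \<le> (0 - a) \<bullet> d12"
    by (rule ht[OF A(8) E12]) (use xh0 A(4) has_deriv_diff_inner[OF D2 D1] has_deriv_diff_inner[OF D0 D1] in auto)

  have HE: "hatphi \<phi> = (\<lambda>x. (\<phi> 0 x - \<phi> 1 x) *\<^sub>R axis 1 1 + (\<phi> 0 x - \<phi> 2 x) *\<^sub>R axis 2 1)"
    by (rule ext) (simp add: hatphi_def vec_eq_iff forall_2 axis_def)
  define L where "L = (\<lambda>v::pt. ((0 - a) \<bullet> v) *\<^sub>R (axis 1 1 :: pt) + ((0 - b) \<bullet> v) *\<^sub>R axis 2 1)"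
  have HD: "(hatphi \<phi> has_derivative L) (at xh)"
    unfolding HE L_def
    by (intro has_derivative_add has_derivative_scaleR_left has_deriv_diff_inner D0 D1 D2)
  have injL: "inj L" using A(6) frechet_derivative_at[OF HD] bij_is_inj by metis
  have det: "a$1 * b$2 - a$2 * b$1 \<noteq> 0"
  proof
    assume dz: "a$1 * b$2 - a$2 * b$1 = 0"
    have "\<exists>v::pt. v \<noteq> 0 \<and> a \<bullet> v = 0 \<and> b \<bullet> v = 0"
    proof (cases "a = 0")
      case True
      show ?thesis
      proof (cases "b = 0")
        case True
        with \<open>a = 0\<close> show ?thesis by (intro exI[of _ "axis 1 1"]) (simp add: axis_eq_0_iff)
      next
        case False
        hence "b$1 \<noteq> 0 \<or> b$2 \<noteq> 0" by (simp add: vec_eq_iff forall_2)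
        hence "vector [- b$2, b$1] \<noteq> (0::pt)" by (auto simp: vec_eq_iff forall_2)
        thus ?thesis using \<open>a = 0\<close> by (intro exI[of _ "vector [- b$2, b$1]"]) (simp add: inner2)
      qed
    next
      case False
      hence "a$1 \<noteq> 0 \<or> a$2 \<noteq> 0" by (simp add: vec_eq_iff forall_2)
      hence "vector [- a$2, a$1] \<noteq> (0::pt)" by (auto simp: vec_eq_iff forall_2)
      moreover have "b \<bullet> vector [- a$2, a$1] = 0" using dz by (simp add: inner2 algebra_simps)
      ultimately show ?thesis by (intro exI[of _ "vector [- a$2, a$1]"]) (simp add: inner2)
    qed
    then obtain v :: pt where v: "v \<noteq> 0" "a \<bullet> v = 0" "b \<bullet> v = 0" by blast
    have "L v = L 0" using v unfolding L_def by (simp add: inner_diff_left)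
    hence "v = 0" using injL by (simp add: inj_eq)
    with v show False by simp
  qed
  have nd: "d02$1^2 + d02$2^2 = 1" "d01$1^2 + d01$2^2 = 1"
    using A(7) A(9) unfolding half_tangent_def norm2 by auto
  have vc: "d01$1 = cos t0 * d02$1 - sin t0 * d02$2" "d01$2 = sin t0 * d02$1 + cos t0 * d02$2"
    using A(12) by (simp_all add: rot_def)
  have wc: "d12$1 = cos t1 * d02$1 - sin t1 * d02$2" "d12$2 = sin t1 * d02$1 + cos t1 * d02$2"
    using A(15) by (simp_all add: rot_def)
  have cs: "(cos t0)^2 + (sin t0)^2 = 1" "(cos t1)^2 + (sin t1)^2 = 1"
    "(cos (t1-t0))^2 + (sin (t1-t0))^2 = 1" by simp_all
  have wv: "d12$1 = cos (t1-t0) * d01$1 - sin (t1-t0) * d01$2"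
    "d12$2 = sin (t1-t0) * d01$1 + cos (t1-t0) * d01$2"
    unfolding wc vc cos_diff sin_diff using cs(1) by algebra+
  have T01c: "a$1 * d01$1 + a$2 * d01$2 = 0" "0 \<le> b$1 * d01$1 + b$2 * d01$2"
    using T01 by (simp_all add: inner2)
  have T02c: "b$1 * d02$1 + b$2 * d02$2 = 0" "0 \<le> a$1 * d02$1 + a$2 * d02$2"
    using T02 by (simp_all add: inner2)
  have T12c: "(b$1 - a$1) * d12$1 + (b$2 - a$2) * d12$2 = 0" "a$1 * d12$1 + a$2 * d12$2 \<le> 0"
    using T12 by (simp_all add: inner2)
  define A1 where "A1 = - a$1 * d01$2 + a$2 * d01$1"
  define B1 where "B1 = - b$1 * d02$2 + b$2 * d02$1"
  define A2 where "A2 = - (b$1 - a$1) * d12$2 + (b$2 - a$2) * d12$1"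
  note G1 = G[where ?u1.0="d02$1" and ?u2.0="d02$2" and c="cos t0" and s="sin t0" and ?v1.0="d01$1" and ?v2.0="d01$2"
      and ?p1.0="a$1" and ?p2.0="a$2" and ?q1.0="b$1" and ?q2.0="b$2", OF nd(1) cs(1) vc T01c(1) T02c(1),
      folded A1_def B1_def]
  note G2 = G[where ?u1.0="d01$1" and ?u2.0="d01$2" and c="cos (t1-t0)" and s="sin (t1-t0)" and ?v1.0="d12$1" and ?v2.0="d12$2"
      and ?p1.0="b$1 - a$1" and ?p2.0="b$2 - a$2" and ?q1.0="a$1" and ?q2.0="a$2", OF nd(2) cs(3) wv T12c(1) T01c(1),
      folded A1_def A2_def]
  note G3 = G[where ?u1.0="d02$1" and ?u2.0="d02$2" and c="cos t1" and s="sin t1" and ?v1.0="d12$1" and ?v2.0="d12$2"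
      and ?p1.0="b$1 - a$1" and ?p2.0="b$2 - a$2" and ?q1.0="b$1" and ?q2.0="b$2", OF nd(1) cs(2) wc T12c(1) T02c(1),
      folded B1_def A2_def]

  have dete: "(b$1 - a$1) * a$2 - (b$2 - a$2) * a$1 = - (a$1 * b$2 - a$2 * b$1)"
    "(b$1 - a$1) * b$2 - (b$2 - a$2) * b$1 = - (a$1 * b$2 - a$2 * b$1)" by algebra+
  have nz1: "A1 \<noteq> 0" "B1 \<noteq> 0" "sin t0 \<noteq> 0" using G1(6) det by auto
  have nz2: "A2 \<noteq> 0" "sin (t1 - t0) \<noteq> 0" using G2(6) det dete(1) by auto
  have nz3: "sin t1 \<noteq> 0" using G3(6) det dete(2) by auto
  have e1: "(b$1 - a$1) * d01$1 + (b$2 - a$2) * d01$2 = (b$1 * d01$1 + b$2 * d01$2) - (a$1 * d01$1 + a$2 * d01$2)"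
    by algebra
  have e2: "(b$1 - a$1) * d02$1 + (b$2 - a$2) * d02$2 = (b$1 * d02$1 + b$2 * d02$2) - (a$1 * d02$1 + a$2 * d02$2)"
    by algebra
  have e3: "b$1 * d12$1 + b$2 * d12$2 = ((b$1 - a$1) * d12$1 + (b$2 - a$2) * d12$2) + (a$1 * d12$1 + a$2 * d12$2)"
    by algebra
  have h1: "0 \<le> - A1 * sin t0" using G1(2) T02c(2) by simp
  have h2: "0 \<le> B1 * sin t0" using G1(3) T01c(2) by simp
  have h3: "0 \<le> - A2 * sin (t1 - t0)" using G2(2) T01c e1 by simp
  have h4: "A1 * sin (t1 - t0) \<le> 0" using G2(3) T12c(2) by simp
  have h5: "- A2 * sin t1 \<le> 0" using G3(2) T02c e2 by simp
  have h6: "B1 * sin t1 \<le> 0" using G3(3) T12c e3 by simp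
  note Ang' = Ang[OF A(10) A(11) A(13) A(14) nz1(1) nz1(2) nz2(1) nz1(3) nz2(2) nz3 h1 h2 h3 h4 h5 h6]
  have na: "norm a = sqrt (A1^2)" using G1(4) by (simp add: norm2)
  have nb: "norm b = sqrt (B1^2)" using G1(5) by (simp add: norm2)
  have nc: "norm (b - a) = sqrt (A2^2)" using G2(4) by (simp add: norm2)
  have nc': "norm (a - b) = sqrt (A2^2)" using nc by (simp add: norm_minus_commute)
  have ab: "a \<bullet> b = A1 * B1 * cos t0" using G1(1) by (simp add: inner2)
  have ca: "(b - a) \<bullet> a = A2 * A1 * cos (t1 - t0)" using G2(1) by (simp add: inner2)
  have cb: "(b - a) \<bullet> b = A2 * B1 * cos t1" using G3(1) by (simp add: inner2)
  have V0: "angle_formula \<phi> xh 0 = arccos (- (A1 * B1 * cos t0) / (sqrt (A1^2) * sqrt (B1^2)))"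
    unfolding angle_formula_def Let_def by (simp add: GD Gr0 Gr1 ab na nb)
  have V1: "angle_formula \<phi> xh 1 = arccos ((A2 * A1 * cos (t1 - t0)) / (sqrt (A2^2) * sqrt (A1^2)))"
    unfolding angle_formula_def Let_def by (simp add: GD Gr0 Gr1 ca na nc)
  have V2: "angle_formula \<phi> xh 2 = arccos (- (B1 * A2 * cos t1) / (sqrt (B1^2) * sqrt (A2^2)))"
    unfolding angle_formula_def Let_def by (simp add: GD Gr0 Gr1 cb inner_commute[of b] nb nc mult.commute)
  have amb: "(a - b) \<bullet> b = - (A2 * B1 * cos t1)"
  proof -
    have "(a - b) \<bullet> b = - ((b - a) \<bullet> b)" by (simp add: inner_diff_left)
    thus ?thesis using cb by simp
  qed
  have ama: "a \<bullet> (a - b) = - (A2 * A1 * cos (t1 - t0))"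
  proof -
    have "a \<bullet> (a - b) = - ((b - a) \<bullet> a)" by (simp add: inner_diff_left inner_diff_right inner_commute[of a b])
    thus ?thesis using ca by simp
  qed
  have ba: "b \<bullet> a = A1 * B1 * cos t0" using ab by (simp add: inner_commute)
  have W0: "angle_formula (\<phi> \<circ> swap02) xh 0 = arccos (- (A2 * B1 * cos t1) / (sqrt (A2^2) * sqrt (B1^2)))"
    unfolding angle_formula_def Let_def o_def swap02_def
    by (simp add: GD Gr0 Gr1 nb nc' amb)
  have W1: "angle_formula (\<phi> \<circ> swap02) xh 1 = arccos ((A1 * A2 * cos (t1 - t0)) / (sqrt (A1^2) * sqrt (A2^2)))"
    unfolding angle_formula_def Let_def o_def swap02_def
    by (simp add: GD Gr0 Gr1 na nc' ama mult.commute)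
  have W2: "angle_formula (\<phi> \<circ> swap02) xh 2 = arccos (- (B1 * A1 * cos t0) / (sqrt (B1^2) * sqrt (A1^2)))"
    unfolding angle_formula_def Let_def o_def swap02_def
    by (simp add: GD Gr0 Gr1 na nb ba mult.commute)
  have sg: "A1 * B1 < 0" "A2 * A1 > 0" "B1 * A2 < 0" "A2 * B1 < 0" "A1 * A2 > 0" "B1 * A1 < 0"
    using Ang'(1,2,3) by (simp_all add: mult.commute)
  show ?thesis
  proof (cases "t0 \<le> t1")
    case True
    have "arccos (cos t0) = t0 \<and> arccos (cos (t1 - t0)) = t1 - t0 \<and> arccos (cos t1) = 2*pi - t1"
      using Ang'(4)[OF True] .
    moreover note fracneg[OF sg(1), of "cos t0"] fracpos[OF sg(2), of "cos (t1 - t0)"] fracneg[OF sg(3), of "cos t1"]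
    ultimately show ?thesis using True V0 V1 V2 by (auto simp: beta_def)
  next
    case False
    have "arccos (cos t1) = t1 \<and> arccos (cos (t1 - t0)) = t0 - t1 \<and> arccos (cos t0) = 2*pi - t0"
      using Ang'(5)[OF False] .
    moreover note fracneg[OF sg(4), of "cos t1"] fracpos[OF sg(5), of "cos (t1 - t0)"] fracneg[OF sg(6), of "cos t0"]
    ultimately show ?thesis using False W0 W1 W2 by (auto simp: beta_def)
  qed
qed

end
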